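(* Let $q$ be an odd prime power and let $B(q)$ be the Brown graph. Let $c$ be a quadric vertex of $B(q)$ and let $a,b$ be two distinct neighbors of $c$ in $B(q)$. Let $A=N_{B(q)}(a)\setminus N_{B(q)}(b)$ and $B=N_{B(q)}(b)\setminus N_{B(q)}(a)$, and let $M$ be the set of edges of $B(q)$ with one endpoint in $A$ and the other in $B$. Let $H$ be the graph obtained from $B(q)$ by deleting the vertex $c$ and all edges of $M$. Then $H$ is $(q-6)$-vertex-connected.
   Context: Let $\mathbb{F}_q$ be the field with $q$ elements. The Brown graph $B(q)$ has as vertices the one-dimensional subspaces of $\mathbb{F}_q^3$, i.e. the equivalence classes $[x]$ of nonzero vectors $x\in\mathbb{F}_q^3$ under $x\sim \alpha x$ for $\alpha\in\mathbb{F}_q\setminus\{0\}$; two distinct vertices $[x]$ and $[y]$ are adjacent if and only if $xy^T=0$. A vertex $[x]$ is called quadric if $xx^T=0$. $N_{B(q)}(v)$ denotes the set of neighbors of $v$ in $B(q)$. A graph is $k$-vertex-connected if between any two distinct vertices there are at least $k$ internally vertex-disjoint paths. *)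

theory Defs
  imports Main "HOL-Library.Cardinality"
begin

type_synonym 'a vec3 = "'a \<times> 'a \<times> 'a"

definition dot3 :: "'a::comm_ring_1 vec3 \<Rightarrow> 'a vec3 \<Rightarrow> 'a" where
  "dot3 x y = fst x * fst y + fst (snd x) * fst (snd y) + snd (snd x) * snd (snd y)"

definition scale3 :: "'a::comm_ring_1 \<Rightarrow> 'a vec3 \<Rightarrow> 'a vec3" where
  "scale3 c x = (c * fst x, c * fst (snd x), c * snd (snd x))"

definition proj_pt :: "'a::field vec3 \<Rightarrow> 'a vec3 set" where
  "proj_pt x = {scale3 c x | c. c \<noteq> 0}"

definition brown_vertices :: "'a::{finite,field} vec3 set set" where
  "brown_vertices = {proj_pt x | x. x \<noteq> (0, 0, 0)}"

text \<open>Adjacency in B(q): distinct classes with x y^T = 0 (independent of representatives).\<close>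
definition brown_adj :: "'a::{finite,field} vec3 set \<Rightarrow> 'a vec3 set \<Rightarrow> bool" where
  "brown_adj u v \<longleftrightarrow> u \<in> brown_vertices \<and> v \<in> brown_vertices \<and> u \<noteq> v \<and>
     (\<exists>x\<in>u. \<exists>y\<in>v. dot3 x y = 0)"

definition quadric :: "'a::{finite,field} vec3 set \<Rightarrow> bool" where
  "quadric u \<longleftrightarrow> (\<exists>x\<in>u. dot3 x x = 0)"

definition brown_nbhd :: "'a::{finite,field} vec3 set \<Rightarrow> 'a vec3 set set" where
  "brown_nbhd u = {v. brown_adj u v}"

definition is_path :: "'v set \<Rightarrow> ('v \<Rightarrow> 'v \<Rightarrow> bool) \<Rightarrow> 'v list \<Rightarrow> 'v \<Rightarrow> 'v \<Rightarrow> bool" where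
  "is_path S E p u v \<longleftrightarrow> p \<noteq> [] \<and> hd p = u \<and> last p = v \<and> distinct p \<and> set p \<subseteq> S \<and>
     (\<forall>i. Suc i < length p \<longrightarrow> E (p ! i) (p ! Suc i))"

definition inner_vertices :: "'v list \<Rightarrow> 'v set" where
  "inner_vertices p = set (butlast (tl p))"

definition k_vertex_connected :: "'v set \<Rightarrow> ('v \<Rightarrow> 'v \<Rightarrow> bool) \<Rightarrow> nat \<Rightarrow> bool" where
  "k_vertex_connected S E k \<longleftrightarrow>
     (\<forall>u\<in>S. \<forall>v\<in>S. u \<noteq> v \<longrightarrow>
        (\<exists>P. finite P \<and> k \<le> card P \<and> (\<forall>p\<in>P. is_path S E p u v) \<and>
             (\<forall>p\<in>P. \<forall>p'\<in>P. p \<noteq> p' \<longrightarrow> inner_vertices p \<inter> inner_vertices p' = {})))"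

end

theory Submission
  imports Defs "HOL-Library.Cardinality"
begin

definition cross3 :: "'a::comm_ring_1 vec3 \<Rightarrow> 'a vec3 \<Rightarrow> 'a vec3" where
 "cross3 x y = (fst (snd x) * snd (snd y) - snd (snd x) * fst (snd y),
                snd (snd x) * fst y - fst x * snd (snd y),
                fst x * fst (snd y) - fst (snd x) * fst y)"

lemma dot3_comm: "dot3 x y = dot3 y x"
  by (simp add: dot3_def mult.commute)
lemma dot3_scale_l: "dot3 (scale3 k x) y = k * dot3 x y"
  by (simp add: dot3_def scale3_def algebra_simps)
lemma dot3_scale_r: "dot3 y (scale3 k x) = k * dot3 y x"
  by (simp add: dot3_def scale3_def algebra_simps)
lemma cross_perp1: "dot3 (cross3 x y) x = 0"
  by (simp add: dot3_def cross3_def algebra_simps)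
lemma cross_perp2: "dot3 (cross3 x y) y = 0"
  by (simp add: dot3_def cross3_def algebra_simps)
lemma triple: "dot3 (cross3 s u) b = dot3 s (cross3 u b)"
  by (simp add: dot3_def cross3_def algebra_simps)
lemma lagrange: "dot3 (cross3 x y) (cross3 x y) = dot3 x x * dot3 y y - (dot3 x y)^2"
  by (simp add: dot3_def cross3_def algebra_simps power2_eq_square)
lemma bac_cab: "cross3 (cross3 x y) z = (dot3 x z * fst y - dot3 y z * fst x,
   dot3 x z * fst (snd y) - dot3 y z * fst (snd x), dot3 x z * snd (snd y) - dot3 y z * snd (snd x))"
  by (simp add: dot3_def cross3_def algebra_simps)

lemma cross_zero:
  fixes y z :: "'a::field vec3"
  assumes "cross3 y z = (0,0,0)" "y \<noteq> (0,0,0)"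
  shows "\<exists>k. z = scale3 k y"
proof -
  obtain y1 y2 y3 where y: "y = (y1,y2,y3)" by (cases y) auto
  obtain z1 z2 z3 where z: "z = (z1,z2,z3)" by (cases z) auto
  have e: "y2*z3 = y3*z2" "y3*z1 = y1*z3" "y1*z2 = y2*z1"
    using assms(1) by (auto simp: y z cross3_def)
  show ?thesis
  proof (cases "y1 = 0")
    case False
    show ?thesis
      by (rule exI[of _ "z1/y1"]) (use False e in \<open>auto simp: y z scale3_def field_simps\<close>)
  next
    case y1: True
    show ?thesis
    proof (cases "y2 = 0")
      case False
      show ?thesis
        by (rule exI[of _ "z2/y2"]) (use False y1 e in \<open>auto simp: y z scale3_def field_simps\<close>)
    next
      case True
      then have "y3 \<noteq> 0" using y1 assms(2) y by auto
      then show ?thesis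
        by (intro exI[of _ "z3/y3"]) (use True y1 e in \<open>auto simp: y z scale3_def field_simps\<close>)
    qed
  qed
qed

lemma cross_ortho:
  fixes x y z :: "'a::field vec3"
  assumes "dot3 x z = 0" "dot3 y z = 0" "cross3 x y \<noteq> (0,0,0)"
  shows "\<exists>k. z = scale3 k (cross3 x y)"
  using cross_zero[OF _ assms(3)] assms(1,2) by (simp add: bac_cab)

lemma pp_mem: "x \<in> proj_pt x"
  unfolding proj_pt_def by (rule CollectI, rule exI[of _ 1]) (simp add: scale3_def)

lemma scale_scale: "scale3 c (scale3 k x) = scale3 (c*k) x"
  by (simp add: scale3_def mult.assoc)

lemma pp_eq_scale: assumes "k \<noteq> 0" shows "proj_pt (scale3 k x) = proj_pt x"
proof
  show "proj_pt (scale3 k x) \<subseteq> proj_pt x"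
    using assms by (auto simp: proj_pt_def scale_scale)
  show "proj_pt x \<subseteq> proj_pt (scale3 k x)"
  proof
    fix z assume "z \<in> proj_pt x"
    then obtain c where c: "c \<noteq> 0" "z = scale3 c x" by (auto simp: proj_pt_def)
    then have "z = scale3 (c / k) (scale3 k x)" using assms by (simp add: scale_scale)
    then show "z \<in> proj_pt (scale3 k x)" using c assms by (auto simp: proj_pt_def)
  qed
qed

lemma pp_eqD: "proj_pt y = proj_pt z \<Longrightarrow> \<exists>k. k \<noteq> 0 \<and> z = scale3 k y"
  using pp_mem[of z] by (auto simp: proj_pt_def)

lemma scale_nz: "k \<noteq> 0 \<Longrightarrow> (y::'a::field vec3) \<noteq> (0,0,0) \<Longrightarrow> scale3 k y \<noteq> (0,0,0)"
  by (cases y) (auto simp: scale3_def)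

lemma pp_sep: "dot3 y w = 0 \<Longrightarrow> dot3 z w \<noteq> 0 \<Longrightarrow> proj_pt y \<noteq> proj_pt z"
  by (auto dest!: pp_eqD simp: dot3_scale_l)

lemma dot_nz: "dot3 y w \<noteq> 0 \<Longrightarrow> y \<noteq> (0,0,0)"
  by (auto simp: dot3_def)

lemma pp_vert: "x \<noteq> (0,0,0) \<Longrightarrow> proj_pt x \<in> brown_vertices"
  unfolding brown_vertices_def by blast

lemma vert_rep: "w \<in> brown_vertices \<Longrightarrow> \<exists>x. x \<noteq> (0,0,0) \<and> w = proj_pt x"
  by (auto simp: brown_vertices_def)

lemma adj_iff:
  fixes x y :: "'a::{finite,field} vec3"
  assumes "x \<noteq> (0,0,0)" "y \<noteq> (0,0,0)"
  shows "brown_adj (proj_pt x) (proj_pt y) \<longleftrightarrow> proj_pt x \<noteq> proj_pt y \<and> dot3 x y = 0"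
proof
  assume h: "brown_adj (proj_pt x) (proj_pt y)"
  then obtain x' y' where "x' \<in> proj_pt x" "y' \<in> proj_pt y" "dot3 x' y' = 0"
    unfolding brown_adj_def by blast
  then obtain k m where "k \<noteq> 0" "m \<noteq> 0" "k * (m * dot3 x y) = 0"
    by (auto simp: proj_pt_def dot3_scale_l dot3_scale_r)
  then show "proj_pt x \<noteq> proj_pt y \<and> dot3 x y = 0" using h by (auto simp: brown_adj_def)
next
  assume "proj_pt x \<noteq> proj_pt y \<and> dot3 x y = 0"
  then show "brown_adj (proj_pt x) (proj_pt y)"
    using assms pp_mem[of x] pp_mem[of y] pp_vert[of x] pp_vert[of y] unfolding brown_adj_def by blast
qed


lemma card_BL:
  fixes w :: "'a::{finite,field} vec3"
  assumes "w \<noteq> (0,0,0)"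
  shows "card {(x,y). dot3 (1,x,y) w = (0::'a)} \<le> CARD('a)"
proof -
  obtain a b c where w: "w = (a,b,c)" by (cases w) auto
  have "card {(x,y). dot3 (1,x,y) w = (0::'a)} \<le> card (UNIV::'a set)"
  proof (cases "c = 0")
    case False
    have "{(x,y). dot3 (1,x,y) w = (0::'a)} \<subseteq> (\<lambda>x. (x, -(a + x*b)/c)) ` UNIV"
    proof
      fix z assume "z \<in> {(x,y). dot3 (1,x,y) w = (0::'a)}"
      then obtain x y where z: "z = (x,y)" "a + x*b + y*c = 0" by (auto simp: w dot3_def)
      then have "y = -(a + x*b)/c" using False by (simp add: field_simps add_eq_0_iff)
      then show "z \<in> (\<lambda>x. (x, -(a + x*b)/c)) ` UNIV" using z by auto
    qed
    then show ?thesis by (meson card_image_le card_mono finite order_trans)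
  next
    case c0: True
    show ?thesis
    proof (cases "b = 0")
      case False
      have "{(x,y). dot3 (1,x,y) w = (0::'a)} \<subseteq> (\<lambda>y. (-a/b, y)) ` UNIV"
      proof
        fix z assume "z \<in> {(x,y). dot3 (1,x,y) w = (0::'a)}"
        then obtain x y where z: "z = (x,y)" "a + x*b = 0" using c0 by (auto simp: w dot3_def)
        then have "x = -a/b" using False by (simp add: field_simps add_eq_0_iff)
        then show "z \<in> (\<lambda>y. (-a/b, y)) ` UNIV" using z by auto
      qed
      then show ?thesis by (meson card_image_le card_mono finite order_trans)
    next
      case True
      then have "a \<noteq> 0" using c0 assms w by auto
      then have "{(x,y). dot3 (1,x,y) w = (0::'a)} = {}" using c0 True by (auto simp: w dot3_def)
      then show ?thesis by simp
    qed
  qed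
  then show ?thesis by simp
qed

lemma card_BM:
  fixes z :: "'a::{finite,field} vec3"
  assumes "z \<noteq> (0,0,0)"
  shows "card {(x,y). \<exists>m. z = scale3 m (1,x,y)} \<le> 1"
proof -
  have "{(x,y). \<exists>m. z = scale3 m (1,x,y)} \<subseteq> {(fst (snd z) / fst z, snd (snd z) / fst z)}"
  proof
    fix t assume "t \<in> {(x,y). \<exists>m. z = scale3 m (1,x,y)}"
    then obtain x y m where t: "t = (x,y)" "z = scale3 m (1,x,y)" by (cases t) auto
    then have "m \<noteq> 0" using assms by (auto simp: scale3_def)
    then show "t \<in> {(fst (snd z) / fst z, snd (snd z) / fst z)}" using t by (auto simp: scale3_def)
  qed
  then have "card {(x,y). \<exists>m. z = scale3 m (1,x,y)} \<le> card {(fst (snd z) / fst z, snd (snd z) / fst z)}"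
    by (intro card_mono) auto
  then show ?thesis by simp
qed

lemma exists_p:
  fixes w1 w2 w3 z1 z2 :: "'a::{finite,field} vec3"
  assumes q: "CARD('a) \<ge> 4"
    and nz: "w1 \<noteq> (0,0,0)" "w2 \<noteq> (0,0,0)" "w3 \<noteq> (0,0,0)" "z1 \<noteq> (0,0,0)" "z2 \<noteq> (0,0,0)"
  shows "\<exists>x y. dot3 (1,x,y) w1 \<noteq> 0 \<and> dot3 (1,x,y) w2 \<noteq> 0 \<and> dot3 (1,x,y) w3 \<noteq> 0 \<and>
    (\<forall>m. z1 \<noteq> scale3 m (1,x,y)) \<and> (\<forall>m. z2 \<noteq> scale3 m (1,x,y))"
proof (rule ccontr)
  assume h: "\<not> ?thesis"
  define BL where "BL w = {(x,y). dot3 (1,x,y) w = (0::'a)}" for w :: "'a vec3"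
  define BM where "BM z = {(x,y). \<exists>m. z = scale3 m (1::'a,x,y)}" for z :: "'a vec3"
  have "UNIV \<subseteq> BL w1 \<union> BL w2 \<union> BL w3 \<union> BM z1 \<union> BM z2"
    using h by (auto simp: BL_def BM_def)
  then have "card (UNIV :: ('a\<times>'a) set) \<le> card (BL w1 \<union> BL w2 \<union> BL w3 \<union> BM z1 \<union> BM z2)"
    by (intro card_mono) auto
  also have "\<dots> \<le> card (BL w1) + card (BL w2) + card (BL w3) + card (BM z1) + card (BM z2)"
    using card_Un_le[of "BL w1 \<union> BL w2 \<union> BL w3 \<union> BM z1" "BM z2"]
      card_Un_le[of "BL w1 \<union> BL w2 \<union> BL w3" "BM z1"]
      card_Un_le[of "BL w1 \<union> BL w2" "BL w3"] card_Un_le[of "BL w1" "BL w2"] by linarith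
  also have "\<dots> \<le> CARD('a) + CARD('a) + CARD('a) + 1 + 1"
    using card_BL[OF nz(1)] card_BL[OF nz(2)] card_BL[OF nz(3)] card_BM[OF nz(4)] card_BM[OF nz(5)]
    unfolding BL_def BM_def by linarith
  finally have "CARD('a) * CARD('a) \<le> 3 * CARD('a) + 2" by simp
  moreover have "4 * CARD('a) \<le> CARD('a) * CARD('a)" using q by simp
  ultimately show False using q by linarith
qed

definition spt :: "'a::field \<Rightarrow> 'a \<Rightarrow> 'a option \<Rightarrow> 'a vec3" where
  "spt x y t = (case t of None \<Rightarrow> (-y,0,1) | Some l \<Rightarrow> (-x - l*y, 1, l))"

lemma spt_perp: "dot3 (spt x y t) (1,x,y) = 0"
  by (cases t) (auto simp: spt_def dot3_def algebra_simps)

lemma spt_nz: "spt x y t \<noteq> (0,0,0)"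
  by (cases t) (auto simp: spt_def)

lemma spt_inj: "proj_pt (spt x y t) = proj_pt (spt x y t2) \<Longrightarrow> t = t2"
  by (cases t; cases t2) (auto dest!: pp_eqD simp: spt_def scale3_def)

lemma perp_gen:
  fixes s s' z p :: "'a::field vec3"
  assumes "s \<noteq> (0,0,0)" "s' \<noteq> (0,0,0)" "proj_pt s \<noteq> proj_pt s'"
    "dot3 z s = 0" "dot3 z s' = 0" "dot3 p s = 0" "dot3 p s' = 0" "p \<noteq> (0,0,0)"
  shows "\<exists>m. z = scale3 m p"
proof -
  have cr: "cross3 s s' \<noteq> (0,0,0)"
  proof
    assume "cross3 s s' = (0,0,0)"
    then obtain k where k: "s' = scale3 k s" using cross_zero assms(1) by blast
    then have "k \<noteq> 0" using assms(2) by (auto simp: scale3_def)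
    then show False using assms(3) k pp_eq_scale by metis
  qed
  obtain k1 where k1: "z = scale3 k1 (cross3 s s')"
    using cross_ortho[OF _ _ cr] assms(4,5) by (metis dot3_comm)
  obtain k2 where k2: "p = scale3 k2 (cross3 s s')"
    using cross_ortho[OF _ _ cr] assms(6,7) by (metis dot3_comm)
  have "k2 \<noteq> 0" using k2 assms(8) by (auto simp: scale3_def)
  then have "z = scale3 (k1/k2) p" using k1 k2 by (simp add: scale_scale)
  then show ?thesis by blast
qed

lemma bad_le1:
  fixes w :: "'a::{finite,field} vec3"
  assumes "\<forall>m. w \<noteq> scale3 m (1,x,y)"
  shows "card {t. dot3 (spt x y t) w = 0} \<le> 1"
proof -
  have "\<forall>t\<in>{t. dot3 (spt x y t) w = 0}. \<forall>t2\<in>{t. dot3 (spt x y t) w = 0}. t = t2"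
  proof (intro ballI, rule ccontr)
    fix t t2 assume h: "t \<in> {t. dot3 (spt x y t) w = 0}" "t2 \<in> {t. dot3 (spt x y t) w = 0}" "t \<noteq> t2"
    have "\<exists>m. w = scale3 m (1,x,y)"
      by (rule perp_gen[OF spt_nz spt_nz, of x y t x y t2])
         (use h spt_inj spt_perp in \<open>auto simp: dot3_comm\<close>)
    then show False using assms by blast
  qed
  then show ?thesis by (simp add: card_le_Suc0_iff_eq)
qed

lemma card_good:
  fixes Ws :: "'a::{finite,field} vec3 set"
  assumes "finite Ws" "\<forall>w\<in>Ws. \<forall>m. w \<noteq> scale3 m (1,x,y)"
  shows "Suc CARD('a) - card Ws \<le> card {t. \<forall>w\<in>Ws. dot3 (spt x y t) w \<noteq> 0}"
proof -
  have eq: "{t. \<forall>w\<in>Ws. dot3 (spt x y t) w \<noteq> 0} = UNIV - (\<Union>w\<in>Ws. {t. dot3 (spt x y t) w = 0})"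
    by auto
  have "card (\<Union>w\<in>Ws. {t. dot3 (spt x y t) w = 0}) \<le> (\<Sum>w\<in>Ws. card {t. dot3 (spt x y t) w = 0})"
    by (rule card_UN_le[OF assms(1)])
  also have "\<dots> \<le> (\<Sum>w\<in>Ws. 1)" by (rule sum_mono) (use bad_le1 assms(2) in blast)
  finally have "card (\<Union>w\<in>Ws. {t. dot3 (spt x y t) w = 0}) \<le> card Ws" by simp
  moreover have "card (UNIV :: 'a option set) - card (\<Union>w\<in>Ws. {t. dot3 (spt x y t) w = 0})
     \<le> card (UNIV - (\<Union>w\<in>Ws. {t. dot3 (spt x y t) w = 0}))"
    by (rule diff_card_le_card_Diff) simp
  ultimately show ?thesis unfolding eq by simp
qed


lemma is_path5:
  "is_path S E [a,b,c,d,e] u v \<longleftrightarrow> a = u \<and> e = v \<and> distinct [a,b,c,d,e] \<and> set [a,b,c,d,e] \<subseteq> S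
     \<and> E a b \<and> E b c \<and> E c d \<and> E d e"
proof -
  have "(\<forall>i. Suc i < length [a,b,c,d,e] \<longrightarrow> E ([a,b,c,d,e] ! i) ([a,b,c,d,e] ! Suc i))
     \<longleftrightarrow> E a b \<and> E b c \<and> E c d \<and> E d e"
  proof
    assume "\<forall>i. Suc i < length [a,b,c,d,e] \<longrightarrow> E ([a,b,c,d,e] ! i) ([a,b,c,d,e] ! Suc i)"
    from this[rule_format, of 0] this[rule_format, of 1] this[rule_format, of 2] this[rule_format, of 3]
    show "E a b \<and> E b c \<and> E c d \<and> E d e" by (simp add: numeral_eq_Suc)
  next
    assume h: "E a b \<and> E b c \<and> E c d \<and> E d e"
    show "\<forall>i. Suc i < length [a,b,c,d,e] \<longrightarrow> E ([a,b,c,d,e] ! i) ([a,b,c,d,e] ! Suc i)"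
    proof (intro allI impI)
      fix i assume "Suc i < length [a,b,c,d,e]"
      then have "i = 0 \<or> i = 1 \<or> i = 2 \<or> i = 3" by auto
      then show "E ([a,b,c,d,e] ! i) ([a,b,c,d,e] ! Suc i)" using h by (auto simp: numeral_eq_Suc)
    qed
  qed
  then show ?thesis unfolding is_path_def by auto
qed

lemma is_path3:
  "is_path S E [a,b,c] u v \<longleftrightarrow> a = u \<and> c = v \<and> distinct [a,b,c] \<and> set [a,b,c] \<subseteq> S
     \<and> E a b \<and> E b c"
proof -
  have "(\<forall>i. Suc i < length [a,b,c] \<longrightarrow> E ([a,b,c] ! i) ([a,b,c] ! Suc i))
     \<longleftrightarrow> E a b \<and> E b c"
  proof
    assume "\<forall>i. Suc i < length [a,b,c] \<longrightarrow> E ([a,b,c] ! i) ([a,b,c] ! Suc i)"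
    from this[rule_format, of 0] this[rule_format, of 1]
    show "E a b \<and> E b c" by simp
  next
    assume h: "E a b \<and> E b c"
    show "\<forall>i. Suc i < length [a,b,c] \<longrightarrow> E ([a,b,c] ! i) ([a,b,c] ! Suc i)"
    proof (intro allI impI)
      fix i assume "Suc i < length [a,b,c]"
      then have "i = 0 \<or> i = 1" by auto
      then show "E ([a,b,c] ! i) ([a,b,c] ! Suc i)" using h by auto
    qed
  qed
  then show ?thesis unfolding is_path_def by auto
qed

lemma inner3: "inner_vertices [a,b,c] = {b}" by (simp add: inner_vertices_def)
lemma inner5: "inner_vertices [a,b,c,d,e] = {b,c,d}" by (simp add: inner_vertices_def)

lemma pp_dot_eq: "proj_pt y = proj_pt z \<Longrightarrow> dot3 y w = 0 \<Longrightarrow> dot3 z w = 0"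
  by (auto dest!: pp_eqD simp: dot3_scale_l)


locale bsetup =
  fixes u0 v0 c0 a0 b0 :: "'a::{finite,field} vec3" and px py :: 'a
  assumes u0nz: "u0 \<noteq> (0,0,0)" and v0nz: "v0 \<noteq> (0,0,0)" and c0nz: "c0 \<noteq> (0,0,0)"
    and a0nz: "a0 \<noteq> (0,0,0)" and b0nz: "b0 \<noteq> (0,0,0)"
    and cq: "dot3 c0 c0 = 0" and ca: "dot3 c0 a0 = 0" and cb: "dot3 c0 b0 = 0"
    and ab: "dot3 a0 b0 \<noteq> 0"
    and uv: "proj_pt u0 \<noteq> proj_pt v0" and uc: "proj_pt u0 \<noteq> proj_pt c0"
    and vc: "proj_pt v0 \<noteq> proj_pt c0"
    and pu: "dot3 (1,px,py) u0 \<noteq> 0" and pv: "dot3 (1,px,py) v0 \<noteq> 0"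
    and pc: "dot3 (1,px,py) c0 \<noteq> 0"
    and pnu: "\<forall>m. u0 \<noteq> scale3 m (1,px,py)" and pnv: "\<forall>m. v0 \<noteq> scale3 m (1,px,py)"

begin

abbreviation "p \<equiv> (1::'a,px,py)"

definition "Aset = brown_nbhd (proj_pt a0) - brown_nbhd (proj_pt b0)"
definition "Bset = brown_nbhd (proj_pt b0) - brown_nbhd (proj_pt a0)"
definition "Mset = {{u, v} | u v. brown_adj u v \<and> u \<in> Aset \<and> v \<in> Bset}"
definition "Ed u v \<longleftrightarrow> brown_adj u v \<and> {u,v} \<notin> Mset"
definition "Sv = brown_vertices - {proj_pt c0}"
definition "W6 = (if proj_pt u0 \<in> Aset then cross3 u0 b0 else if proj_pt u0 \<in> Bset then cross3 u0 a0 else u0)"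
definition "W7 = (if proj_pt v0 \<in> Aset then cross3 v0 b0 else if proj_pt v0 \<in> Bset then cross3 v0 a0 else v0)"
definition "Ws = {u0, v0, c0, a0, b0, W6, W7}"
definition "good s \<longleftrightarrow> s \<noteq> (0,0,0) \<and> dot3 s p = 0 \<and> (\<forall>w\<in>Ws. dot3 s w \<noteq> 0)"
definition "pth s = (if proj_pt (cross3 s u0) = proj_pt (cross3 s v0)
   then [proj_pt u0, proj_pt (cross3 s u0), proj_pt v0]
   else [proj_pt u0, proj_pt (cross3 s u0), proj_pt s, proj_pt (cross3 s v0), proj_pt v0])"

lemma M_cases: "{y,z} \<in> Mset \<Longrightarrow> (y \<in> Aset \<and> z \<in> Bset) \<or> (y \<in> Bset \<and> z \<in> Aset)"
  unfolding Mset_def by (auto simp: doubleton_eq_iff)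

lemma AB_disj: "y \<in> Aset \<Longrightarrow> y \<notin> Bset"
  by (auto simp: Aset_def Bset_def)

lemma inA: "x \<noteq> (0,0,0) \<Longrightarrow> proj_pt x \<in> Aset \<Longrightarrow> dot3 a0 x = 0"
  using adj_iff[OF a0nz] by (auto simp: Aset_def brown_nbhd_def)
lemma inB: "x \<noteq> (0,0,0) \<Longrightarrow> proj_pt x \<in> Bset \<Longrightarrow> dot3 b0 x = 0"
  using adj_iff[OF b0nz] by (auto simp: Bset_def brown_nbhd_def)

lemma b_notA: "proj_pt b0 \<notin> Aset"
  using inA[OF b0nz] ab by auto
lemma a_notB: "proj_pt a0 \<notin> Bset"
  using inB[OF a0nz] ab by (auto simp: dot3_comm)

lemma cross_notmult:
  assumes "y \<noteq> (0,0,0)" "dot3 p y \<noteq> 0" "proj_pt y \<noteq> proj_pt z" "z \<noteq> (0,0,0)"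
  shows "cross3 y z \<noteq> scale3 m p"
proof
  assume h: "cross3 y z = scale3 m p"
  have "m * dot3 p y = 0" using cross_perp1[of y z] h by (simp add: dot3_scale_l)
  then have "m = 0" using assms(2) by simp
  then have "cross3 y z = (0,0,0)" using h by (simp add: scale3_def)
  then obtain k where k: "z = scale3 k y" using cross_zero assms(1) by blast
  then have "k \<noteq> 0" using assms(4) by (auto simp: scale3_def)
  then show False using k assms(3) pp_eq_scale by metis
qed

lemma Ws_notmult: "\<forall>w\<in>Ws. \<forall>m. w \<noteq> scale3 m p"
proof (intro ballI allI)
  fix w m assume w: "w \<in> Ws"
  have pu': "dot3 p u0 \<noteq> 0" using pu .
  have c: "c0 \<noteq> scale3 m p"
  proof
    assume h: "c0 = scale3 m p"
    have "m \<noteq> 0" using h c0nz by (auto simp: scale3_def)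
    have "dot3 c0 c0 = m * (m * dot3 p p)" using h by (simp add: dot3_scale_l dot3_scale_r)
    then have "dot3 p p = 0" using cq \<open>m \<noteq> 0\<close> by simp
    moreover have "dot3 p c0 = m * dot3 p p" using h by (simp add: dot3_scale_r)
    ultimately show False using pc by simp
  qed
  have a: "a0 \<noteq> scale3 m p" for m
  proof
    assume h: "a0 = scale3 m p"
    have "dot3 c0 a0 = m * dot3 c0 p" using h by (simp add: dot3_scale_r)
    then have "m = 0" using ca pc by (simp add: dot3_comm)
    then show False using h a0nz by (simp add: scale3_def)
  qed
  have b: "b0 \<noteq> scale3 m p" for m
  proof
    assume h: "b0 = scale3 m p"
    have "dot3 c0 b0 = m * dot3 c0 p" using h by (simp add: dot3_scale_r)
    then have "m = 0" using cb pc by (simp add: dot3_comm)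
    then show False using h b0nz by (simp add: scale3_def)
  qed
  have w6: "W6 \<noteq> scale3 m p"
  proof -
    have ub: "proj_pt u0 \<noteq> proj_pt b0" if "proj_pt u0 \<in> Aset" using that b_notA by metis
    have ua: "proj_pt u0 \<noteq> proj_pt a0" if "proj_pt u0 \<in> Bset" using that a_notB by metis
    show ?thesis unfolding W6_def
      using cross_notmult[OF u0nz pu _ b0nz] cross_notmult[OF u0nz pu _ a0nz] ub ua pnu
      by auto
  qed
  have w7: "W7 \<noteq> scale3 m p"
  proof -
    have ub: "proj_pt v0 \<noteq> proj_pt b0" if "proj_pt v0 \<in> Aset" using that b_notA by metis
    have ua: "proj_pt v0 \<noteq> proj_pt a0" if "proj_pt v0 \<in> Bset" using that a_notB by metis
    show ?thesis unfolding W7_def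
      using cross_notmult[OF v0nz pv _ b0nz] cross_notmult[OF v0nz pv _ a0nz] ub ua pnv
      by auto
  qed
  show "w \<noteq> scale3 m p" using w c a b w6 w7 pnu pnv unfolding Ws_def by auto
qed

lemma Ws_card: "card Ws \<le> 7"
proof -
  have "Ws = set [u0, v0, c0, a0, b0, W6, W7]" by (simp add: Ws_def)
  then show ?thesis using card_length[of "[u0, v0, c0, a0, b0, W6, W7]"] by simp
qed

end

context bsetup begin

lemma good_facts:
  assumes "good s"
  shows "s \<noteq> (0,0,0)" "dot3 p s = 0" "dot3 s u0 \<noteq> 0" "dot3 s v0 \<noteq> 0" "dot3 s c0 \<noteq> 0"
    "dot3 s a0 \<noteq> 0" "dot3 s b0 \<noteq> 0" "dot3 s W6 \<noteq> 0" "dot3 s W7 \<noteq> 0"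
  using assms by (auto simp: good_def Ws_def dot3_comm)

lemma perp_p_nz:
  assumes "s \<noteq> (0,0,0)" "dot3 p s = 0" "dot3 p w \<noteq> 0"
  shows "cross3 s w \<noteq> (0,0,0)"
proof
  assume "cross3 s w = (0,0,0)"
  then obtain k where "w = scale3 k s" using cross_zero assms(1) by blast
  then have "dot3 p w = 0" using assms(2) by (simp add: dot3_scale_r)
  then show False using assms(3) by simp
qed

lemma X_nz: "good s \<Longrightarrow> cross3 s u0 \<noteq> (0,0,0)"
  using perp_p_nz good_facts pu by blast
lemma T_nz: "good s \<Longrightarrow> cross3 s v0 \<noteq> (0,0,0)"
  using perp_p_nz good_facts pv by blast

lemma sep_p: "good s \<Longrightarrow> dot3 p w \<noteq> 0 \<Longrightarrow> proj_pt s \<noteq> proj_pt w"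
  using pp_sep[of s p w] good_facts(2)[of s] by (simp add: dot3_comm)

lemma notinAB: "good s \<Longrightarrow> proj_pt s \<notin> Aset \<and> proj_pt s \<notin> Bset"
  using inA[of s] inB[of s] good_facts[of s] by (auto simp: dot3_comm)

lemma Ed_intro:
  assumes "y \<noteq> (0,0,0)" "z \<noteq> (0,0,0)" "proj_pt y \<noteq> proj_pt z" "dot3 y z = 0" "{proj_pt y, proj_pt z} \<notin> Mset"
  shows "Ed (proj_pt y) (proj_pt z)"
  unfolding Ed_def using adj_iff[OF assms(1,2)] assms(3-5) by simp

lemma notM_ux: assumes "good s" shows "{proj_pt u0, proj_pt (cross3 s u0)} \<notin> Mset"
proof
  assume "{proj_pt u0, proj_pt (cross3 s u0)} \<in> Mset"
  then consider "proj_pt u0 \<in> Aset" "proj_pt (cross3 s u0) \<in> Bset"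
    | "proj_pt u0 \<in> Bset" "proj_pt (cross3 s u0) \<in> Aset" using M_cases by blast
  then show False
  proof cases
    case 1
    then have "W6 = cross3 u0 b0" by (simp add: W6_def)
    then have "dot3 (cross3 s u0) b0 \<noteq> 0" using good_facts(8)[OF assms] by (simp add: triple)
    then show False using inB[OF X_nz[OF assms] 1(2)] by (simp add: dot3_comm)
  next
    case 2
    then have "W6 = cross3 u0 a0" using AB_disj by (auto simp: W6_def)
    then have "dot3 (cross3 s u0) a0 \<noteq> 0" using good_facts(8)[OF assms] by (simp add: triple)
    then show False using inA[OF X_nz[OF assms] 2(2)] by (simp add: dot3_comm)
  qed
qed

lemma notM_tv: assumes "good s" shows "{proj_pt (cross3 s v0), proj_pt v0} \<notin> Mset"
proof
  assume "{proj_pt (cross3 s v0), proj_pt v0} \<in> Mset"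
  then have "{proj_pt v0, proj_pt (cross3 s v0)} \<in> Mset" by (simp add: insert_commute)
  then consider "proj_pt v0 \<in> Aset" "proj_pt (cross3 s v0) \<in> Bset"
    | "proj_pt v0 \<in> Bset" "proj_pt (cross3 s v0) \<in> Aset" using M_cases by blast
  then show False
  proof cases
    case 1
    then have "W7 = cross3 v0 b0" by (simp add: W7_def)
    then have "dot3 (cross3 s v0) b0 \<noteq> 0" using good_facts(9)[OF assms] by (simp add: triple)
    then show False using inB[OF T_nz[OF assms] 1(2)] by (simp add: dot3_comm)
  next
    case 2
    then have "W7 = cross3 v0 a0" using AB_disj by (auto simp: W7_def)
    then have "dot3 (cross3 s v0) a0 \<noteq> 0" using good_facts(9)[OF assms] by (simp add: triple)
    then show False using inA[OF T_nz[OF assms] 2(2)] by (simp add: dot3_comm)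
  qed
qed

lemma notM_s1: "good s \<Longrightarrow> {y, proj_pt s} \<notin> Mset"
  using M_cases notinAB by blast
lemma notM_s2: "good s \<Longrightarrow> {proj_pt s, y} \<notin> Mset"
  using M_cases notinAB by blast

lemma path_ok:
  assumes g: "good s"
  shows "is_path Sv Ed (pth s) (proj_pt u0) (proj_pt v0)"
proof -
  define X where "X = cross3 s u0"
  define T where "T = cross3 s v0"
  note gf = good_facts[OF g]
  have Xnz: "X \<noteq> (0,0,0)" using X_nz[OF g] by (simp add: X_def)
  have Tnz: "T \<noteq> (0,0,0)" using T_nz[OF g] by (simp add: T_def)
  have Xs: "dot3 X s = 0" and Xu: "dot3 X u0 = 0" unfolding X_def by (rule cross_perp1, rule cross_perp2)
  have Ts: "dot3 T s = 0" and Tv: "dot3 T v0 = 0" unfolding T_def by (rule cross_perp1, rule cross_perp2)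
  have su: "dot3 u0 s \<noteq> 0" "dot3 v0 s \<noteq> 0" "dot3 c0 s \<noteq> 0" using gf by (auto simp: dot3_comm)
  have d1: "proj_pt X \<noteq> proj_pt u0" using pp_sep[OF Xs su(1)] .
  have d2: "proj_pt X \<noteq> proj_pt s" using pp_sep[OF Xu gf(3)] .
  have d3: "proj_pt X \<noteq> proj_pt v0" using pp_sep[OF Xs su(2)] .
  have d4: "proj_pt X \<noteq> proj_pt c0" using pp_sep[OF Xs su(3)] .
  have d5: "proj_pt s \<noteq> proj_pt u0" "proj_pt s \<noteq> proj_pt v0" "proj_pt s \<noteq> proj_pt c0"
    using sep_p[OF g] pu pv pc by auto
  have d6: "proj_pt T \<noteq> proj_pt s" using pp_sep[OF Tv gf(4)] .
  have d7: "proj_pt T \<noteq> proj_pt u0" using pp_sep[OF Ts su(1)] .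
  have d8: "proj_pt T \<noteq> proj_pt v0" using pp_sep[OF Ts su(2)] .
  have d9: "proj_pt T \<noteq> proj_pt c0" using pp_sep[OF Ts su(3)] .
  have vs: "proj_pt u0 \<in> Sv" "proj_pt v0 \<in> Sv" "proj_pt X \<in> Sv" "proj_pt T \<in> Sv" "proj_pt s \<in> Sv"
    using pp_vert[OF u0nz] pp_vert[OF v0nz] pp_vert[OF Xnz] pp_vert[OF Tnz] pp_vert[OF gf(1)] uc vc d4 d9 d5(3)
    by (simp_all add: Sv_def)
  have e1: "Ed (proj_pt u0) (proj_pt X)"
    using Ed_intro[OF u0nz Xnz] d1 Xu notM_ux[OF g] by (simp add: X_def dot3_comm)
  have e2: "Ed (proj_pt X) (proj_pt s)"
    using Ed_intro[OF Xnz gf(1)] d2 Xs notM_s1[OF g] by simp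
  have e3: "Ed (proj_pt s) (proj_pt T)"
    using Ed_intro[OF gf(1) Tnz] d6 Ts notM_s2[OF g] by (simp add: dot3_comm)
  have e4: "Ed (proj_pt T) (proj_pt v0)"
    using Ed_intro[OF Tnz v0nz] d8 Tv notM_tv[OF g] by (simp add: T_def)
  show ?thesis
  proof (cases "proj_pt X = proj_pt T")
    case True
    then have "pth s = [proj_pt u0, proj_pt X, proj_pt v0]" by (simp add: pth_def X_def T_def)
    then show ?thesis
      using e1 e4 True vs d1[THEN not_sym] d3 uv by (simp add: is_path3)
  next
    case False
    then have "pth s = [proj_pt u0, proj_pt X, proj_pt s, proj_pt T, proj_pt v0]" by (simp add: pth_def X_def T_def)
    then show ?thesis
      using e1 e2 e3 e4 False vs d1[THEN not_sym] d2 d3 d5(1,2) d5(1)[THEN not_sym] d6[THEN not_sym] d7[THEN not_sym] d8 uv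
      by (simp add: is_path5)
  qed
qed

lemma inner_sub: "inner_vertices (pth s) \<subseteq> {proj_pt (cross3 s u0), proj_pt s, proj_pt (cross3 s v0)}"
  by (auto simp: pth_def inner3 inner5)

lemma inner_X: "proj_pt (cross3 s u0) \<in> inner_vertices (pth s)"
  by (auto simp: pth_def inner3 inner5)

lemma perp_zero:
  assumes "good s" "good s'" "proj_pt s \<noteq> proj_pt s'" "dot3 z s = 0" "dot3 z s' = 0"
    "dot3 z w = 0" "dot3 p w \<noteq> 0"
  shows "z = (0,0,0)"
proof -
  obtain m where m: "z = scale3 m p"
    using perp_gen[of s s' z p] assms good_facts[OF assms(1)] good_facts[OF assms(2)] by auto
  then have "m * dot3 p w = 0" using assms(6) by (simp add: dot3_scale_l)
  then have "m = 0" using assms(7) by simp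
  then show ?thesis using m by (simp add: scale3_def)
qed

lemma disj:
  assumes g: "good s" and g': "good s'" and ne: "proj_pt s \<noteq> proj_pt s'"
  shows "inner_vertices (pth s) \<inter> inner_vertices (pth s') = {}"
proof -
  define X where "X = cross3 s u0"
  define T where "T = cross3 s v0"
  define X' where "X' = cross3 s' u0"
  define T' where "T' = cross3 s' v0"
  have Xs: "dot3 X s = 0" and Xu: "dot3 X u0 = 0" unfolding X_def by (rule cross_perp1, rule cross_perp2)
  have Ts: "dot3 T s = 0" and Tv: "dot3 T v0 = 0" unfolding T_def by (rule cross_perp1, rule cross_perp2)
  have Xs': "dot3 X' s' = 0" and Xu': "dot3 X' u0 = 0" unfolding X'_def by (rule cross_perp1, rule cross_perp2)
  have Ts': "dot3 T' s' = 0" and Tv': "dot3 T' v0 = 0" unfolding T'_def by (rule cross_perp1, rule cross_perp2)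
  have Xnz': "X' \<noteq> (0,0,0)" using X_nz[OF g'] by (simp add: X'_def)
  have Tnz': "T' \<noteq> (0,0,0)" using T_nz[OF g'] by (simp add: T'_def)
  have pu': "dot3 p u0 \<noteq> 0" using pu . have pv': "dot3 p v0 \<noteq> 0" using pv .
  have su: "dot3 s u0 \<noteq> 0" "dot3 s v0 \<noteq> 0" "dot3 s' u0 \<noteq> 0" "dot3 s' v0 \<noteq> 0"
    using good_facts[OF g] good_facts[OF g'] by auto
  have n1: "proj_pt X \<noteq> proj_pt X'"
  proof
    assume h: "proj_pt X = proj_pt X'"
    have "X' = (0,0,0)" using perp_zero[OF g g' ne pp_dot_eq[OF h Xs] Xs' Xu' pu'] .
    then show False using Xnz' by simp
  qed
  have n2: "proj_pt X \<noteq> proj_pt T'"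
  proof
    assume h: "proj_pt X = proj_pt T'"
    have "T' = (0,0,0)" using perp_zero[OF g g' ne pp_dot_eq[OF h Xs] Ts' Tv' pv'] .
    then show False using Tnz' by simp
  qed
  have n3: "proj_pt T \<noteq> proj_pt X'"
  proof
    assume h: "proj_pt T = proj_pt X'"
    have "X' = (0,0,0)" using perp_zero[OF g g' ne pp_dot_eq[OF h Ts] Xs' Xu' pu'] .
    then show False using Xnz' by simp
  qed
  have n4: "proj_pt T \<noteq> proj_pt T'"
  proof
    assume h: "proj_pt T = proj_pt T'"
    have "T' = (0,0,0)" using perp_zero[OF g g' ne pp_dot_eq[OF h Ts] Ts' Tv' pv'] .
    then show False using Tnz' by simp
  qed
  have n5: "proj_pt X \<noteq> proj_pt s'" using pp_sep[OF Xu su(3)] .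
  have n6: "proj_pt X' \<noteq> proj_pt s" using pp_sep[OF Xu' su(1)] .
  have n7: "proj_pt T \<noteq> proj_pt s'" using pp_sep[OF Tv su(4)] .
  have n8: "proj_pt T' \<noteq> proj_pt s" using pp_sep[OF Tv' su(2)] .
  have "{proj_pt X, proj_pt s, proj_pt T} \<inter> {proj_pt X', proj_pt s', proj_pt T'} = {}"
    using n1 n2 n3 n4 n5 n6 n7 n8 ne by auto
  then show ?thesis using inner_sub[of s] inner_sub[of s'] unfolding X_def T_def X'_def T'_def by blast
qed

end

context bsetup begin

lemma main_loc:
  "\<exists>P. finite P \<and> CARD('a) - 6 \<le> card P \<and> (\<forall>pa\<in>P. is_path Sv Ed pa (proj_pt u0) (proj_pt v0)) \<and>
     (\<forall>pa\<in>P. \<forall>p'\<in>P. pa \<noteq> p' \<longrightarrow> inner_vertices pa \<inter> inner_vertices p' = {})"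
proof -
  define G where "G = {t. \<forall>w\<in>Ws. dot3 (spt px py t) w \<noteq> 0}"
  have gG: "good (spt px py t)" if "t \<in> G" for t
    using that spt_nz spt_perp unfolding good_def G_def by blast
  have "Suc CARD('a) - card Ws \<le> card G"
    unfolding G_def by (rule card_good) (use Ws_notmult in \<open>auto simp: Ws_def\<close>)
  then have cG: "CARD('a) - 6 \<le> card G" using Ws_card by linarith
  define f where "f t = pth (spt px py t)" for t
  have dis: "inner_vertices (f t) \<inter> inner_vertices (f t') = {}" if "t \<in> G" "t' \<in> G" "t \<noteq> t'" for t t'
    unfolding f_def using disj[OF gG[OF that(1)] gG[OF that(2)]] spt_inj that(3) by blast
  have inj: "inj_on f G"
  proof (rule inj_onI, rule ccontr)
    fix t t' assume h: "t \<in> G" "t' \<in> G" "f t = f t'" "t \<noteq> t'"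
    have "proj_pt (cross3 (spt px py t) u0) \<in> inner_vertices (f t)" unfolding f_def by (rule inner_X)
    then show False using dis[OF h(1,2,4)] h(3) by auto
  qed
  show ?thesis
  proof (intro exI conjI)
    show "finite (f ` G)" by simp
    show "CARD('a) - 6 \<le> card (f ` G)" using cG card_image[OF inj] by simp
    show "\<forall>pa\<in>f ` G. is_path Sv Ed pa (proj_pt u0) (proj_pt v0)"
      using path_ok gG unfolding f_def by blast
    show "\<forall>pa\<in>f ` G. \<forall>p'\<in>f ` G. pa \<noteq> p' \<longrightarrow> inner_vertices pa \<inter> inner_vertices p' = {}"
      using dis by blast
  qed
qed

end

lemma iso_eq:
  fixes y z :: "'a::field vec3"
  assumes "y \<noteq> (0,0,0)" "z \<noteq> (0,0,0)" "dot3 y y = 0" "dot3 y z = 0" "dot3 z z = 0"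
  shows "proj_pt y = proj_pt z"
proof (cases "cross3 y z = (0,0,0)")
  case True
  then obtain k where k: "z = scale3 k y" using cross_zero assms(1) by blast
  then have "k \<noteq> 0" using assms(2) by (auto simp: scale3_def)
  then show ?thesis using k pp_eq_scale by metis
next
  case False
  obtain k1 where k1: "y = scale3 k1 (cross3 y z)"
    using cross_ortho[OF _ _ False, of y] assms by (auto simp: dot3_comm)
  obtain k2 where k2: "z = scale3 k2 (cross3 y z)"
    using cross_ortho[OF _ _ False, of z] assms by (auto simp: dot3_comm)
  have "k1 \<noteq> 0" using k1 assms(1) by (auto simp: scale3_def)
  have "k2 \<noteq> 0" using k2 assms(2) by (auto simp: scale3_def)
  have "z = scale3 (k2/k1) y"
  proof -
    obtain C where C: "C = cross3 y z" by blast
    have "scale3 (k2/k1) (scale3 k1 C) = scale3 k2 C" using \<open>k1 \<noteq> 0\<close> by (simp add: scale_scale)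
    then show ?thesis using k1 k2 C by metis
  qed
  then show ?thesis using pp_eq_scale \<open>k1 \<noteq> 0\<close> \<open>k2 \<noteq> 0\<close> by (metis divide_eq_0_iff)
qed

lemma ab_nonorth:
  fixes a0 b0 c0 :: "'a::field vec3"
  assumes nz: "a0 \<noteq> (0,0,0)" "b0 \<noteq> (0,0,0)" "c0 \<noteq> (0,0,0)"
    and cq: "dot3 c0 c0 = 0" and ca: "dot3 c0 a0 = 0" and cb: "dot3 c0 b0 = 0"
    and d: "proj_pt a0 \<noteq> proj_pt b0" "proj_pt a0 \<noteq> proj_pt c0" "proj_pt b0 \<noteq> proj_pt c0"
  shows "dot3 a0 b0 \<noteq> 0"
proof
  assume ab0: "dot3 a0 b0 = 0"
  have cr: "cross3 a0 b0 \<noteq> (0,0,0)"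
  proof
    assume "cross3 a0 b0 = (0,0,0)"
    then obtain k where k: "b0 = scale3 k a0" using cross_zero nz(1) by blast
    then have "k \<noteq> 0" using nz(2) by (auto simp: scale3_def)
    then show False using d(1) k pp_eq_scale by metis
  qed
  obtain k where k: "c0 = scale3 k (cross3 a0 b0)"
    using cross_ortho[OF _ _ cr, of c0] ca cb by (auto simp: dot3_comm)
  have "k \<noteq> 0" using k nz(3) by (auto simp: scale3_def)
  have "dot3 c0 c0 = k * (k * (dot3 a0 a0 * dot3 b0 b0))"
    using k ab0 by (simp add: dot3_scale_l dot3_scale_r lagrange)
  then have "dot3 a0 a0 = 0 \<or> dot3 b0 b0 = 0" using cq \<open>k \<noteq> 0\<close> by simp
  then show False
  proof
    assume "dot3 a0 a0 = 0"
    then have "proj_pt a0 = proj_pt c0" using iso_eq[OF nz(1,3)] ca cq by (simp add: dot3_comm)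
    then show False using d(2) by simp
  next
    assume "dot3 b0 b0 = 0"
    then have "proj_pt b0 = proj_pt c0" using iso_eq[OF nz(2,3)] cb cq by (simp add: dot3_comm)
    then show False using d(3) by simp
  qed
qed


theorem lemma1:
  fixes a b c :: "'a::{finite,field} vec3 set"
  assumes "odd CARD('a)"
    and "c \<in> brown_vertices" and "quadric c"
    and "brown_adj c a" and "brown_adj c b" and "a \<noteq> b"
  defines "A \<equiv> brown_nbhd a - brown_nbhd b"
    and "B \<equiv> brown_nbhd b - brown_nbhd a"
  defines "M \<equiv> {{u, v} | u v. brown_adj u v \<and> u \<in> A \<and> v \<in> B}"
  shows "k_vertex_connected (brown_vertices - {c})
           (\<lambda>u v. brown_adj u v \<and> {u, v} \<notin> M) (nat (int CARD('a) - 6))"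
proof -
  obtain c0 where c0: "c0 \<noteq> (0,0,0)" "c = proj_pt c0" using vert_rep assms(2) by blast
  have "a \<in> brown_vertices" "b \<in> brown_vertices" using assms(4,5) by (auto simp: brown_adj_def)
  then obtain a0 b0 where a0: "a0 \<noteq> (0,0,0)" "a = proj_pt a0" and b0: "b0 \<noteq> (0,0,0)" "b = proj_pt b0"
    using vert_rep by metis
  have cq: "dot3 c0 c0 = 0"
  proof -
    obtain z where z: "z \<in> c" "dot3 z z = 0" using assms(3) by (auto simp: quadric_def)
    then obtain k where k: "k \<noteq> 0" "z = scale3 k c0" using c0 by (auto simp: proj_pt_def)
    have "dot3 z z = k * (k * dot3 c0 c0)" using k by (simp add: dot3_scale_l dot3_scale_r)
    then show ?thesis using z k by simp
  qed
  have ca: "dot3 c0 a0 = 0" "proj_pt c0 \<noteq> proj_pt a0"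
    using assms(4) adj_iff[OF c0(1) a0(1)] c0 a0 by auto
  have cb: "dot3 c0 b0 = 0" "proj_pt c0 \<noteq> proj_pt b0"
    using assms(5) adj_iff[OF c0(1) b0(1)] c0 b0 by auto
  have ab: "dot3 a0 b0 \<noteq> 0"
    using ab_nonorth[OF a0(1) b0(1) c0(1) cq ca(1) cb(1)] ca(2) cb(2) assms(6) a0 b0 by auto
  show ?thesis unfolding k_vertex_connected_def
  proof (intro ballI impI)
    fix u v assume u: "u \<in> brown_vertices - {c}" and v: "v \<in> brown_vertices - {c}" and uv: "u \<noteq> v"
    show "\<exists>P. finite P \<and> nat (int CARD('a) - 6) \<le> card P \<and>
        (\<forall>p\<in>P. is_path (brown_vertices - {c}) (\<lambda>u v. brown_adj u v \<and> {u, v} \<notin> M) p u v) \<and>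
        (\<forall>p\<in>P. \<forall>p'\<in>P. p \<noteq> p' \<longrightarrow> inner_vertices p \<inter> inner_vertices p' = {})"
    proof (cases "CARD('a) \<ge> 7")
      case False
      then have "nat (int CARD('a) - 6) = 0" by simp
      then show ?thesis by (intro exI[of _ "{}"]) simp
    next
      case True
      obtain u0 where u0: "u0 \<noteq> (0,0,0)" "u = proj_pt u0" using vert_rep u by blast
      obtain v0 where v0: "v0 \<noteq> (0,0,0)" "v = proj_pt v0" using vert_rep v by blast
      have q4: "CARD('a) \<ge> 4" using True by simp
      obtain x y where xy: "dot3 (1,x,y) u0 \<noteq> 0" "dot3 (1,x,y) v0 \<noteq> 0" "dot3 (1,x,y) c0 \<noteq> 0"
        "\<forall>m. u0 \<noteq> scale3 m (1,x,y)" "\<forall>m. v0 \<noteq> scale3 m (1,x,y)"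
        using exists_p[OF q4 u0(1) v0(1) c0(1) u0(1) v0(1)] by blast
      interpret bsetup u0 v0 c0 a0 b0 x y
        by unfold_locales (use u0 v0 c0 a0 b0 cq ca cb ab xy u v uv in auto)
      obtain P where P: "finite P" "CARD('a) - 6 \<le> card P"
        "\<forall>pa\<in>P. is_path Sv Ed pa (proj_pt u0) (proj_pt v0)"
        "\<forall>pa\<in>P. \<forall>p'\<in>P. pa \<noteq> p' \<longrightarrow> inner_vertices pa \<inter> inner_vertices p' = {}"
        using main_loc by blast
      have Sv: "Sv = brown_vertices - {c}" by (simp add: Sv_def c0)
      have Ed: "Ed = (\<lambda>u v. brown_adj u v \<and> {u, v} \<notin> M)"
        by (intro ext) (simp add: Ed_def Mset_def Aset_def Bset_def M_def A_def B_def a0 b0)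
      show ?thesis using P u0 v0 unfolding Sv Ed by (intro exI[of _ P]) auto
    qed
  qed
qed

end
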